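(* Let $S_8=\mathrm{diag}(1,-1,1,-1,1,-1,1,-1)$. For every $a\in C\ell_{1,2}$, $$L(a')=L(a)^T,\quad R(a')=R(a)^T,\quad L(\bar a)=S_8L(a)^TS_8,\quad R(\bar a)=S_8R(a)^TS_8.$$
   Context: $C\ell_{1,2}$ is the real Clifford algebra generated by $i_1,i_2,i_3$ with $i_1^2=1$, $i_2^2=i_3^2=-1$ and $i_ti_m=-i_mi_t$ for $t\neq m$, with real basis $e_0=1$, $e_1=i_1$, $e_2=i_2$, $e_3=i_1i_2$, $e_4=i_3$, $e_5=i_1i_3$, $e_6=i_2i_3$, $e_7=i_1i_2i_3$. For $x=\sum_{t=0}^7x_te_t$ write $\overrightarrow{x}=(x_0,\dots,x_7)^T\in\mathbb{R}^8$. For $a\in C\ell_{1,2}$, $L(a)$ and $R(a)$ are the real $8\times8$ matrices with $\overrightarrow{ax}=L(a)\overrightarrow{x}$ and $\overrightarrow{xa}=R(a)\overrightarrow{x}$ for all $x\in C\ell_{1,2}$. For $a=\sum a_te_t$: $\bar a=a_0-a_1e_1-a_2e_2-a_3e_3-a_4e_4-a_5e_5-a_6e_6+a_7e_7$ and $a'=a_0+a_1e_1-a_2e_2+a_3e_3-a_4e_4+a_5e_5-a_6e_6-a_7e_7$. *)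

theory Defs
  imports "Jordan_Normal_Form.Matrix"
begin

text \<open>Elements of the Clifford algebra Cl(1,2) are represented by their real coefficient
vectors x = (x_0,...,x_7) of dimension 8 w.r.t. the basis e_0,...,e_7.
The basis element e_s corresponds to the bitmask s over the generators i_1 (bit 0),
i_2 (bit 1), i_3 (bit 2), with factors in increasing order: e_1 = i_1, e_2 = i_2,
e_3 = i_1 i_2, e_4 = i_3, e_5 = i_1 i_3, e_6 = i_2 i_3, e_7 = i_1 i_2 i_3.\<close>

definition gen_sq :: "nat \<Rightarrow> real" where
  "gen_sq k = (if k = 0 then 1 else -1)"

text \<open>Sign in e_s e_t = cl_sign s t * e_(s xor t): (-1)^(number of transpositions needed
to sort the generator word) times the squares of the common generators.\<close>
definition cl_sign :: "nat \<Rightarrow> nat \<Rightarrow> real" where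
  "cl_sign s t =
     (-1) ^ card {(i, j). i < 3 \<and> j < i \<and> bit s i \<and> bit t j}
     * (\<Prod>k\<in>{k. k < 3 \<and> bit s k \<and> bit t k}. gen_sq k)"

definition cl_mult :: "real vec \<Rightarrow> real vec \<Rightarrow> real vec" where
  "cl_mult x y = vec 8 (\<lambda>u. \<Sum>s<8. \<Sum>t<8.
      (if xor s t = u then cl_sign s t * (x $ s) * (y $ t) else 0))"

definition Lmat :: "real vec \<Rightarrow> real mat" where
  "Lmat a = mat 8 8 (\<lambda>(u, t). cl_mult a (unit_vec 8 t) $ u)"

definition Rmat :: "real vec \<Rightarrow> real mat" where
  "Rmat a = mat 8 8 (\<lambda>(u, t). cl_mult (unit_vec 8 t) a $ u)"

definition cl_bar :: "real vec \<Rightarrow> real vec" where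
  "cl_bar a = vec 8 (\<lambda>t. (if t = 0 \<or> t = 7 then 1 else -1) * a $ t)"

definition cl_prime :: "real vec \<Rightarrow> real vec" where
  "cl_prime a = vec 8 (\<lambda>t. (if t \<in> {0, 1, 3, 5} then 1 else -1) * a $ t)"

definition S8 :: "real mat" where
  "S8 = mat 8 8 (\<lambda>(i, j). if i = j then (-1) ^ i else 0)"

end

theory Submission imports Defs begin
lemma filter_ins: "Set.filter P (insert x A) = (if P x then insert x (Set.filter P A) else Set.filter P A)"
  by auto
lemma sign_eq: "cl_sign s t =
     (-1) ^ card (Set.filter (\<lambda>(i, j). bit s i \<and> bit t j) {(1,0),(2,0),(2,1)})
     * (\<Prod>k\<in>Set.filter (\<lambda>k. bit s k \<and> bit t k) {0,1,2}. gen_sq k)"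
proof -
  have 1: "{(i, j). i < 3 \<and> j < i \<and> bit s i \<and> bit t j} = Set.filter (\<lambda>(i, j). bit s i \<and> bit t j) {(1::nat,0::nat),(2,0),(2,1)}"
    by (auto simp: less_Suc_eq numeral_3_eq_3 numeral_2_eq_2)
  have 2: "{k. k < 3 \<and> bit s k \<and> bit t k} = Set.filter (\<lambda>k. bit s k \<and> bit t k) {0::nat,1,2}"
    by (auto simp: less_Suc_eq numeral_3_eq_3 numeral_2_eq_2)
  show ?thesis unfolding cl_sign_def 1 2 ..
qed

lemma xor8: assumes "u < 8" "t < (8::nat)" shows "xor u t < 8"
proof -
  have "take_bit 3 u = u" "take_bit 3 t = t" using assms by (simp_all add: take_bit_nat_eq_self_iff)
  then have "xor u t = take_bit 3 (xor u t)" by (metis take_bit_xor)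
  also have "... < 2^3" by (rule take_bit_nat_less_exp)
  finally show ?thesis by simp
qed

lemma cl_mult_unit_right: assumes "u < 8" "t < 8" shows "cl_mult a (unit_vec 8 t) $ u = cl_sign (xor u t) t * a $ (xor u t)"
proof -
  have inner: "(\<Sum>ta<8. if xor s ta = u then f ta * (unit_vec 8 t $ ta) else 0) = (if xor s t = u then f t else 0)" for s and f :: "nat \<Rightarrow> real"
  proof -
    have "(\<Sum>ta<8. if xor s ta = u then f ta * (unit_vec 8 t $ ta) else 0) = (\<Sum>ta<8. if ta = t then (if xor s t = u then f t else 0) else 0)"
      by (intro sum.cong refl) (auto simp: unit_vec_def)
    then show ?thesis using assms by simp
  qed
  have "cl_mult a (unit_vec 8 t) $ u = (\<Sum>s<8. (if xor s t = u then cl_sign s t * (a $ s) else 0))"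
    using assms inner[of s "\<lambda>ta. cl_sign s ta * a $ s" for s] unfolding cl_mult_def by simp
  also have "... = (\<Sum>s<8. (if s = xor u t then cl_sign s t * (a $ s) else 0))"
    by (intro sum.cong refl) (auto simp: bit_eq_iff bit_xor_iff)
  also have "... = cl_sign (xor u t) t * a $ (xor u t)"
    using assms by (simp add: xor8) 
  finally show ?thesis .
qed

lemma cl_mult_unit_left: assumes "u < 8" "t < 8" shows "cl_mult (unit_vec 8 t) a $ u = cl_sign t (xor u t) * a $ (xor u t)"
proof -
  have inner: "(\<Sum>s<8. if xor s ta = u then f s * (unit_vec 8 t $ s) * c else 0) = (if xor t ta = u then f t * c else 0)" for ta c and f :: "nat \<Rightarrow> real"
  proof -
    have "(\<Sum>s<8. if xor s ta = u then f s * (unit_vec 8 t $ s) * c else 0) = (\<Sum>s<8. if s = t then (if xor t ta = u then f t * c else 0) else 0)"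
      by (intro sum.cong refl) (auto simp: unit_vec_def)
    then show ?thesis using assms by simp
  qed
  have "cl_mult (unit_vec 8 t) a $ u = (\<Sum>ta<8. \<Sum>s<8. (if xor s ta = u then cl_sign s ta * (unit_vec 8 t $ s) * (a $ ta) else 0))"
    using assms unfolding cl_mult_def by (simp, subst sum.swap, simp add: mult_ac)
  also have "... = (\<Sum>ta<8. (if xor t ta = u then cl_sign t ta * (a $ ta) else 0))"
    using inner[where c="a $ ta" and f="\<lambda>s. cl_sign s ta" and ta=ta for ta] by simp
  also have "... = (\<Sum>ta<8. (if ta = xor u t then cl_sign t ta * (a $ ta) else 0))"
    by (intro sum.cong refl) (auto simp: bit_eq_iff bit_xor_iff)
  also have "... = cl_sign t (xor u t) * a $ (xor u t)"
    using assms by (simp add: xor8) 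
  finally show ?thesis .
qed

lemma enum8: "(k::nat) < 8 \<Longrightarrow> k = 0 \<or> k = 1 \<or> k = 2 \<or> k = 3 \<or> k = 4 \<or> k = 5 \<or> k = 6 \<or> k = 7"
  by auto

lemma sign_bits: "cl_sign s t = (if bit s 1 \<and> bit t 0 then -1 else 1) * (if bit s 2 \<and> bit t 0 then -1 else 1)
   * (if bit s 2 \<and> bit t 1 then -1 else 1) * (if bit s 1 \<and> bit t 1 then -1 else 1) * (if bit s 2 \<and> bit t 2 then -1 else 1)"
  unfolding sign_eq filter_ins
  by (cases "bit s 0"; cases "bit s 1"; cases "bit s 2"; cases "bit t 0"; cases "bit t 1"; cases "bit t 2"; simp add: gen_sq_def)

lemma all8: "(\<forall>k<(8::nat). Q k) = (Q 0 \<and> Q 1 \<and> Q 2 \<and> Q 3 \<and> Q 4 \<and> Q 5 \<and> Q 6 \<and> Q 7)"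
proof
  assume "\<forall>k<(8::nat). Q k" then show "Q 0 \<and> Q 1 \<and> Q 2 \<and> Q 3 \<and> Q 4 \<and> Q 5 \<and> Q 6 \<and> Q 7" by simp
next
  assume "Q 0 \<and> Q 1 \<and> Q 2 \<and> Q 3 \<and> Q 4 \<and> Q 5 \<and> Q 6 \<and> Q 7"
  then show "\<forall>k<(8::nat). Q k" using enum8 by blast
qed

lemma num1: "\<forall>k<8. \<forall>t<8. cl_sign k t * (if k \<in> {0, 1, 3, 5} then 1 else -1) = cl_sign k (xor k t)"
  unfolding all8 by (simp add: sign_bits bit_Suc_0_iff bit_iff_odd)
lemma num2: "\<forall>k<8. \<forall>t<8. cl_sign t k * (if k \<in> {0, 1, 3, 5} then 1 else -1) = cl_sign (xor k t) k"
  unfolding all8 by (simp add: sign_bits bit_Suc_0_iff bit_iff_odd)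
lemma num3: "\<forall>k<8. \<forall>t<8. cl_sign k t * (if k = 0 \<or> k = 7 then 1 else -1) = (-1)^(xor k t) * cl_sign k (xor k t) * (-1)^t"
  unfolding all8 by (simp add: sign_bits bit_Suc_0_iff bit_iff_odd)
lemma num4: "\<forall>k<8. \<forall>t<8. cl_sign t k * (if k = 0 \<or> k = 7 then 1 else -1) = (-1)^(xor k t) * cl_sign (xor k t) k * (-1)^t"
  unfolding all8 by (simp add: sign_bits bit_Suc_0_iff bit_iff_odd)

lemma numeric:
  assumes "k < 8" "t < 8"
  shows "cl_sign k t * (if k \<in> {0, 1, 3, 5} then 1 else -1) = cl_sign k (xor k t)"
    and "cl_sign t k * (if k \<in> {0, 1, 3, 5} then 1 else -1) = cl_sign (xor k t) k"
    and "cl_sign k t * (if k = 0 \<or> k = 7 then 1 else -1) = (-1)^(xor k t) * cl_sign k (xor k t) * (-1)^t"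
    and "cl_sign t k * (if k = 0 \<or> k = 7 then 1 else -1) = (-1)^(xor k t) * cl_sign (xor k t) k * (-1)^t"
  using num1 num2 num3 num4 assms by blast+

lemma S8_entry: assumes "i < 8" shows "S8 $$ (i,j) = (if j < 8 then (if i = j then (-1)^i else 0) else S8 $$ (i,j))"
  using assms by (simp add: S8_def)

lemma S8_conj: assumes "M \<in> carrier_mat 8 8" "i < 8" "j < 8"
  shows "(S8 * M * S8) $$ (i,j) = (-1)^i * M $$ (i,j) * (-1)^j"
proof -
  have S: "S8 \<in> carrier_mat 8 8" by (simp add: S8_def)
  have "(S8 * M) $$ (i,l) = (-1)^i * M $$ (i,l)" if "l < 8" for l
  proof -
    have "(S8 * M) $$ (i,l) = (\<Sum>k<8. (if i = k then (-1)^i else 0) * M $$ (k,l))"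
      using assms S that by (simp add: scalar_prod_def S8_def lessThan_atLeast0)
    also have "... = (\<Sum>k<8. if k = i then (-1)^i * M $$ (i,l) else 0)"
      by (rule sum.cong) auto
    also have "... = (-1)^i * M $$ (i,l)" using assms by simp
    finally show ?thesis .
  qed
  then have "(S8 * M * S8) $$ (i,j) = (\<Sum>k<8. (-1)^i * M $$ (i,k) * (if k = j then (-1)^k else 0))"
    using assms S by (simp add: scalar_prod_def S8_def lessThan_atLeast0)
  also have "... = (\<Sum>k<8. if k = j then (-1)^i * M $$ (i,j) * (-1)^j else 0)"
    by (rule sum.cong) auto
  also have "... = (-1)^i * M $$ (i,j) * (-1)^j" using assms by simp
  finally show ?thesis .
qed

lemma L_entry: "u < 8 \<Longrightarrow> t < 8 \<Longrightarrow> Lmat a $$ (u,t) = cl_sign (xor u t) t * a $ (xor u t)"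
  by (simp add: Lmat_def cl_mult_unit_right)
lemma R_entry: "u < 8 \<Longrightarrow> t < 8 \<Longrightarrow> Rmat a $$ (u,t) = cl_sign t (xor u t) * a $ (xor u t)"
  by (simp add: Rmat_def cl_mult_unit_left)

theorem proposition2p2:
  fixes a :: "real vec"
  assumes "dim_vec a = 8"
  shows "Lmat (cl_prime a) = (Lmat a)\<^sup>T
       \<and> Rmat (cl_prime a) = (Rmat a)\<^sup>T
       \<and> Lmat (cl_bar a) = S8 * (Lmat a)\<^sup>T * S8
       \<and> Rmat (cl_bar a) = S8 * (Rmat a)\<^sup>T * S8"
proof (intro conjI)
  have cL: "Lmat b \<in> carrier_mat 8 8" for b by (simp add: Lmat_def)
  have cR: "Rmat b \<in> carrier_mat 8 8" for b by (simp add: Rmat_def)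
  have x: "xor t u = xor u t" for t u :: nat by (simp add: xor.commute)
  have xx: "xor (xor u t) t = u" for t u :: nat by (simp add: xor.assoc)
  have P: "k < 8 \<Longrightarrow> cl_prime a $ k = (if k \<in> {0, 1, 3, 5} then 1 else -1) * a $ k" for k
    unfolding cl_prime_def by (simp only: index_vec)
  have B: "k < 8 \<Longrightarrow> cl_bar a $ k = (if k = 0 \<or> k = 7 then 1 else -1) * a $ k" for k
    unfolding cl_bar_def by (simp only: index_vec)
  have T: "M \<in> carrier_mat 8 8 \<Longrightarrow> u < 8 \<Longrightarrow> t < 8 \<Longrightarrow> M\<^sup>T $$ (u,t) = M $$ (t,u)" for M :: "real mat" and u t
    by simp
  show "Lmat (cl_prime a) = (Lmat a)\<^sup>T"
  proof (rule eq_matI)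
    fix u t assume ut: "u < dim_row (Lmat a)\<^sup>T" "t < dim_col (Lmat a)\<^sup>T"
    then have u: "u < 8" and t: "t < 8" by (simp_all add: Lmat_def)
    define k where "k = xor u t"
    have k: "k < 8" unfolding k_def using u t by (rule xor8)
    have kt: "xor k t = u" and tu: "xor t u = k" unfolding k_def by (rule xx, rule x)
    have "Lmat (cl_prime a) $$ (u, t) = cl_sign k t * cl_prime a $ k" unfolding k_def using u t by (rule L_entry)
    also have "... = (cl_sign k t * (if k \<in> {0, 1, 3, 5} then 1 else -1)) * a $ k" by (simp only: P[OF k] mult.assoc)
    also have "... = cl_sign k u * a $ k" by (simp only: numeric(1)[OF k t] kt)
    also have "... = (Lmat a)\<^sup>T $$ (u, t)" by (simp only: T[OF cL u t] L_entry[OF t u] tu)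
    finally show "Lmat (cl_prime a) $$ (u, t) = (Lmat a)\<^sup>T $$ (u, t)" .
  qed (simp_all add: Lmat_def)
  show "Rmat (cl_prime a) = (Rmat a)\<^sup>T"
  proof (rule eq_matI)
    fix u t assume ut: "u < dim_row (Rmat a)\<^sup>T" "t < dim_col (Rmat a)\<^sup>T"
    then have u: "u < 8" and t: "t < 8" by (simp_all add: Rmat_def)
    define k where "k = xor u t"
    have k: "k < 8" unfolding k_def using u t by (rule xor8)
    have kt: "xor k t = u" and tu: "xor t u = k" unfolding k_def by (rule xx, rule x)
    have "Rmat (cl_prime a) $$ (u, t) = cl_sign t k * cl_prime a $ k" unfolding k_def using u t by (rule R_entry)
    also have "... = (cl_sign t k * (if k \<in> {0, 1, 3, 5} then 1 else -1)) * a $ k" by (simp only: P[OF k] mult.assoc)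
    also have "... = cl_sign u k * a $ k" by (simp only: numeric(2)[OF k t] kt)
    also have "... = (Rmat a)\<^sup>T $$ (u, t)" by (simp only: T[OF cR u t] R_entry[OF t u] tu)
    finally show "Rmat (cl_prime a) $$ (u, t) = (Rmat a)\<^sup>T $$ (u, t)" .
  qed (simp_all add: Rmat_def)
  show "Lmat (cl_bar a) = S8 * (Lmat a)\<^sup>T * S8"
  proof (rule eq_matI)
    fix u t assume ut: "u < dim_row (S8 * (Lmat a)\<^sup>T * S8)" "t < dim_col (S8 * (Lmat a)\<^sup>T * S8)"
    then have u: "u < 8" and t: "t < 8" by (simp_all add: S8_def)
    define k where "k = xor u t"
    have k: "k < 8" unfolding k_def using u t by (rule xor8)
    have kt: "xor k t = u" and tu: "xor t u = k" unfolding k_def by (rule xx, rule x)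
    have cLT: "(Lmat a)\<^sup>T \<in> carrier_mat 8 8" using cL by simp
    have "Lmat (cl_bar a) $$ (u, t) = cl_sign k t * cl_bar a $ k" unfolding k_def using u t by (rule L_entry)
    also have "... = (cl_sign k t * (if k = 0 \<or> k = 7 then 1 else -1)) * a $ k" by (simp only: B[OF k] mult.assoc)
    also have "... = (-1)^u * (cl_sign k u * a $ k) * (-1)^t" by (simp only: numeric(3)[OF k t] kt mult.commute mult.left_commute mult.assoc)
    also have "... = (S8 * (Lmat a)\<^sup>T * S8) $$ (u, t)"
      by (simp only: S8_conj[OF cLT u t] T[OF cL u t] L_entry[OF t u] tu)
    finally show "Lmat (cl_bar a) $$ (u, t) = (S8 * (Lmat a)\<^sup>T * S8) $$ (u, t)" .
  qed (simp_all add: Lmat_def S8_def)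
  show "Rmat (cl_bar a) = S8 * (Rmat a)\<^sup>T * S8"
  proof (rule eq_matI)
    fix u t assume ut: "u < dim_row (S8 * (Rmat a)\<^sup>T * S8)" "t < dim_col (S8 * (Rmat a)\<^sup>T * S8)"
    then have u: "u < 8" and t: "t < 8" by (simp_all add: S8_def)
    define k where "k = xor u t"
    have k: "k < 8" unfolding k_def using u t by (rule xor8)
    have kt: "xor k t = u" and tu: "xor t u = k" unfolding k_def by (rule xx, rule x)
    have cRT: "(Rmat a)\<^sup>T \<in> carrier_mat 8 8" using cR by simp
    have "Rmat (cl_bar a) $$ (u, t) = cl_sign t k * cl_bar a $ k" unfolding k_def using u t by (rule R_entry)
    also have "... = (cl_sign t k * (if k = 0 \<or> k = 7 then 1 else -1)) * a $ k" by (simp only: B[OF k] mult.assoc)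
    also have "... = (-1)^u * (cl_sign u k * a $ k) * (-1)^t" by (simp only: numeric(4)[OF k t] kt mult.commute mult.left_commute mult.assoc)
    also have "... = (S8 * (Rmat a)\<^sup>T * S8) $$ (u, t)"
      by (simp only: S8_conj[OF cRT u t] T[OF cR u t] R_entry[OF t u] tu)
    finally show "Rmat (cl_bar a) $$ (u, t) = (S8 * (Rmat a)\<^sup>T * S8) $$ (u, t)" .
  qed (simp_all add: Rmat_def S8_def)
qed
end
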